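(* Let $\mathcal{N}^+$ be a (metric or topological) rooted network on $X$ and let $Z\subseteq X$ with $|Z|\ge 2$. For every $x\in Z$ there is $y\in Z$ such that $\mathrm{MRCA}(\{x,y\})=\mathrm{MRCA}(Z)$.
   Context: Rooted network on $X$: connected directed acyclic graph without loops (at most two parallel edges allowed) with a root $r$ (indegree 0, outdegree 2), leaves bijectively labeled by $X$ (indegree 1, outdegree 0), tree nodes (indegree 1, outdegree 2) and hybrid nodes (indegree 2, outdegree 1). A node $v$ is above $u$ if there is a nonempty directed path from $v$ to $u$. For nonempty $Z\subseteq X$, let $D$ be the set of nodes lying on every directed path from $r$ to any $z\in Z$; $D$ is totally ordered by "above", and $\mathrm{MRCA}(Z)$ is the lowest element of $D$. *)

theory Defs
  imports Main
begin

text \<open>A directed multigraph is given by a node set V, an edge set E (edge identifiers,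
  so that parallel edges are possible) and source/target maps.\<close>

definition arcs :: "'e set \<Rightarrow> ('e \<Rightarrow> 'v) \<Rightarrow> ('e \<Rightarrow> 'v) \<Rightarrow> ('v \<times> 'v) set" where
  "arcs E src tgt = {(src e, tgt e) | e. e \<in> E}"

definition indeg :: "'e set \<Rightarrow> ('e \<Rightarrow> 'v) \<Rightarrow> 'v \<Rightarrow> nat" where
  "indeg E tgt v = card {e \<in> E. tgt e = v}"

definition outdeg :: "'e set \<Rightarrow> ('e \<Rightarrow> 'v) \<Rightarrow> 'v \<Rightarrow> nat" where
  "outdeg E src v = card {e \<in> E. src e = v}"

definition leaves :: "'v set \<Rightarrow> 'e set \<Rightarrow> ('e \<Rightarrow> 'v) \<Rightarrow> ('e \<Rightarrow> 'v) \<Rightarrow> 'v set" where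
  "leaves V E src tgt = {v \<in> V. indeg E tgt v = 1 \<and> outdeg E src v = 0}"

definition rooted_network ::
  "'v set \<Rightarrow> 'e set \<Rightarrow> ('e \<Rightarrow> 'v) \<Rightarrow> ('e \<Rightarrow> 'v) \<Rightarrow> 'v \<Rightarrow> 'x set \<Rightarrow> ('x \<Rightarrow> 'v) \<Rightarrow> bool" where
  "rooted_network V E src tgt r X lab \<longleftrightarrow>
     finite V \<and> finite E \<and>
     (\<forall>e\<in>E. src e \<in> V \<and> tgt e \<in> V) \<and>
     (\<forall>e\<in>E. src e \<noteq> tgt e) \<and>
     (\<forall>a b. card {e \<in> E. src e = a \<and> tgt e = b} \<le> 2) \<and>
     acyclic (arcs E src tgt) \<and>
     (\<forall>u\<in>V. \<forall>v\<in>V. (u, v) \<in> (arcs E src tgt \<union> (arcs E src tgt)\<inverse>)\<^sup>*) \<and>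
     r \<in> V \<and> indeg E tgt r = 0 \<and> outdeg E src r = 2 \<and>
     (\<forall>v\<in>V - {r}.
        (indeg E tgt v = 1 \<and> outdeg E src v = 0) \<or>
        (indeg E tgt v = 1 \<and> outdeg E src v = 2) \<or>
        (indeg E tgt v = 2 \<and> outdeg E src v = 1)) \<and>
     bij_betw lab X (leaves V E src tgt)"

definition dpath :: "'v set \<Rightarrow> 'e set \<Rightarrow> ('e \<Rightarrow> 'v) \<Rightarrow> ('e \<Rightarrow> 'v) \<Rightarrow> 'v list \<Rightarrow> bool" where
  "dpath V E src tgt p \<longleftrightarrow> p \<noteq> [] \<and> set p \<subseteq> V \<and>
     (\<forall>i. Suc i < length p \<longrightarrow> (p ! i, p ! Suc i) \<in> arcs E src tgt)"

definition above :: "'e set \<Rightarrow> ('e \<Rightarrow> 'v) \<Rightarrow> ('e \<Rightarrow> 'v) \<Rightarrow> 'v \<Rightarrow> 'v \<Rightarrow> bool" where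
  "above E src tgt v u \<longleftrightarrow> (v, u) \<in> (arcs E src tgt)\<^sup>+"

definition common_nodes ::
  "'v set \<Rightarrow> 'e set \<Rightarrow> ('e \<Rightarrow> 'v) \<Rightarrow> ('e \<Rightarrow> 'v) \<Rightarrow> 'v \<Rightarrow> ('x \<Rightarrow> 'v) \<Rightarrow> 'x set \<Rightarrow> 'v set" where
  "common_nodes V E src tgt r lab Z =
     {v \<in> V. \<forall>z\<in>Z. \<forall>p. dpath V E src tgt p \<and> hd p = r \<and> last p = lab z \<longrightarrow> v \<in> set p}"

definition MRCA ::
  "'v set \<Rightarrow> 'e set \<Rightarrow> ('e \<Rightarrow> 'v) \<Rightarrow> ('e \<Rightarrow> 'v) \<Rightarrow> 'v \<Rightarrow> ('x \<Rightarrow> 'v) \<Rightarrow> 'x set \<Rightarrow> 'v" where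
  "MRCA V E src tgt r lab Z =
     (THE v. v \<in> common_nodes V E src tgt r lab Z \<and>
        (\<forall>u \<in> common_nodes V E src tgt r lab Z. u \<noteq> v \<longrightarrow> above E src tgt u v))"

end

theory Submission
  imports Defs
begin

lemma dpath_Nil: "\<not> dpath V E s t []"
  by (simp add: dpath_def)

lemma dpath_single: "dpath V E s t [a] \<longleftrightarrow> a \<in> V"
  by (simp add: dpath_def)

lemma dpath_Cons2:
  "dpath V E s t (a # b # p) \<longleftrightarrow> a \<in> V \<and> (a, b) \<in> arcs E s t \<and> dpath V E s t (b # p)"
proof
  assume L: "dpath V E s t (a # b # p)"
  have h: "\<And>i. Suc i < length (a # b # p) \<Longrightarrow> ((a#b#p) ! i, (a#b#p) ! Suc i) \<in> arcs E s t"
    using L by (simp add: dpath_def)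
  have "(a, b) \<in> arcs E s t" using h[of 0] by simp
  moreover have "\<forall>i. Suc i < length (b # p) \<longrightarrow> ((b#p) ! i, (b#p) ! Suc i) \<in> arcs E s t"
  proof (intro allI impI)
    fix i assume "Suc i < length (b # p)"
    then show "((b#p) ! i, (b#p) ! Suc i) \<in> arcs E s t" using h[of "Suc i"] by simp
  qed
  ultimately show "a \<in> V \<and> (a, b) \<in> arcs E s t \<and> dpath V E s t (b # p)"
    using L by (simp add: dpath_def)
next
  assume R: "a \<in> V \<and> (a, b) \<in> arcs E s t \<and> dpath V E s t (b # p)"
  have "\<forall>i. Suc i < length (a # b # p) \<longrightarrow> ((a#b#p) ! i, (a#b#p) ! Suc i) \<in> arcs E s t"
  proof (intro allI impI)
    fix i assume i: "Suc i < length (a # b # p)"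
    show "((a#b#p) ! i, (a#b#p) ! Suc i) \<in> arcs E s t"
    proof (cases i)
      case 0 then show ?thesis using R by simp
    next
      case (Suc j)
      then show ?thesis using R i unfolding dpath_def by simp
    qed
  qed
  then show "dpath V E s t (a # b # p)" using R by (simp add: dpath_def)
qed

lemma dpath_Cons:
  "dpath V E s t (a # p) \<longleftrightarrow> a \<in> V \<and> (p \<noteq> [] \<longrightarrow> (a, hd p) \<in> arcs E s t \<and> dpath V E s t p)"
  by (cases p) (auto simp: dpath_single dpath_Cons2)

lemma dpath_concat:
  "dpath V E s t a \<Longrightarrow> dpath V E s t b \<Longrightarrow> last a = hd b \<Longrightarrow> dpath V E s t (a @ tl b)"
proof (induction a rule: induct_list012)
  case 1 then show ?case by (simp add: dpath_Nil)
next
  case (2 x)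
  then have "b \<noteq> []" using dpath_Nil by metis
  then have "[x] @ tl b = b" using 2 by (cases b) auto
  then show ?case using 2 by simp
next
  case (3 x y zs)
  then have "dpath V E s t ((y # zs) @ tl b)" using dpath_Cons2 by fastforce
  then show ?case using 3 by (simp add: dpath_Cons2)
qed

lemma dpath_split:
  "dpath V E s t (p1 @ v # p2) \<Longrightarrow> dpath V E s t (p1 @ [v]) \<and> dpath V E s t (v # p2)"
proof (induction p1)
  case Nil then show ?case by (auto simp: dpath_Cons)
next
  case (Cons a p1)
  have "hd (p1 @ [v]) = hd (p1 @ v # p2)" by (cases p1) auto
  then show ?case using Cons by (auto simp: dpath_Cons)
qed

lemma dpath_above:
  "dpath V E s t (v # p) \<Longrightarrow> u \<in> set p \<Longrightarrow> (v, u) \<in> (arcs E s t)\<^sup>+"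
proof (induction p arbitrary: v)
  case Nil then show ?case by simp
next
  case (Cons c p)
  then have vc: "(v, c) \<in> arcs E s t" and dc: "dpath V E s t (c # p)"
    by (auto simp: dpath_Cons2)
  show ?case
  proof (cases "u = c")
    case True then show ?thesis using vc by auto
  next
    case False
    then have "(c, u) \<in> (arcs E s t)\<^sup>+" using Cons dc by auto
    then show ?thesis using vc by (meson trancl_into_trancl2)
  qed
qed

lemma dpath_total:
  "dpath V E s t p \<Longrightarrow> a \<in> set p \<Longrightarrow> b \<in> set p \<Longrightarrow>
    a = b \<or> (a, b) \<in> (arcs E s t)\<^sup>+ \<or> (b, a) \<in> (arcs E s t)\<^sup>+"
proof (induction p)
  case Nil then show ?case by simp
next
  case (Cons c p)
  show ?case
  proof (cases "p = []")
    case True then show ?thesis using Cons by simp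
  next
    case False
    then have dp: "dpath V E s t p" using Cons.prems(1) by (simp add: dpath_Cons)
    show ?thesis
      using Cons.IH[OF dp] Cons.prems dpath_above[OF Cons.prems(1)] by auto
  qed
qed

locale RN =
  fixes V :: "'v set" and E :: "'e set" and src tgt :: "'e \<Rightarrow> 'v" and r :: 'v
    and X :: "'x set" and lab :: "'x \<Rightarrow> 'v"
  assumes net: "rooted_network V E src tgt r X lab"
begin

abbreviation "A \<equiv> arcs E src tgt"
abbreviation "dp \<equiv> dpath V E src tgt"
abbreviation "D \<equiv> common_nodes V E src tgt r lab"

lemma finA: "finite A"
  using net unfolding rooted_network_def arcs_def by (auto simp: setcompr_eq_image)

lemma acyc: "acyclic A"
  using net unfolding rooted_network_def by simp

lemma wfA: "wf A"
  using finA acyc wf_iff_acyclic_if_finite by blast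

lemma wfT: "wf (A\<^sup>+)"
  using wfA wf_trancl by blast

lemma wfTc: "wf ((A\<^sup>+)\<inverse>)"
proof -
  have "finite (A\<inverse>)" using finA by simp
  moreover have "acyclic (A\<inverse>)" using acyc by (simp add: acyclic_converse)
  ultimately have "wf (A\<inverse>)" using wf_iff_acyclic_if_finite by blast
  then have "wf ((A\<inverse>)\<^sup>+)" using wf_trancl by blast
  then show ?thesis by (simp add: trancl_converse)
qed

lemma noncyc: "(a, b) \<in> A\<^sup>+ \<Longrightarrow> (b, a) \<notin> A\<^sup>+"
  using acyc by (meson acyclic_def trancl_trans)

lemma rV: "r \<in> V" using net unfolding rooted_network_def by simp

lemma path_exists: "v \<in> V \<Longrightarrow> \<exists>p. dp p \<and> hd p = r \<and> last p = v"
proof (induction v rule: wf_induct[OF wfA])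
  case (1 v)
  show ?case
  proof (cases "v = r")
    case True then show ?thesis using rV by (intro exI[of _ "[r]"]) (simp add: dpath_single)
  next
    case False
    with 1(2) net have "indeg E tgt v = 1 \<or> indeg E tgt v = 2"
      unfolding rooted_network_def by auto
    then have "{e \<in> E. tgt e = v} \<noteq> {}" unfolding indeg_def by (metis card.empty zero_neq_numeral zero_neq_one)
    then obtain e where e: "e \<in> E" "tgt e = v" by auto
    let ?u = "src e"
    have uv: "(?u, v) \<in> A" using e unfolding arcs_def by auto
    have uV: "?u \<in> V" using e net unfolding rooted_network_def by auto
    obtain p where p: "dp p" "hd p = r" "last p = ?u" using 1(1) uv uV by blast
    have "dp [?u, v]" using uv uV 1(2) by (simp add: dpath_Cons2 dpath_single)
    then have "dp (p @ tl [?u, v])" using dpath_concat[OF p(1)] p(3) by (metis list.sel(1))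
    moreover have "p \<noteq> []" using p(1) dpath_Nil by metis
    ultimately show ?thesis using p by (intro exI[of _ "p @ [v]"]) simp
  qed
qed

lemma labV: "x \<in> X \<Longrightarrow> lab x \<in> V"
proof -
  assume "x \<in> X"
  moreover have "bij_betw lab X (leaves V E src tgt)" using net unfolding rooted_network_def by simp
  ultimately have "lab x \<in> leaves V E src tgt" using bij_betw_apply by metis
  then show ?thesis unfolding leaves_def by simp
qed

lemma D_V: "D S \<subseteq> V" unfolding common_nodes_def by auto

lemma r_in_D: "r \<in> D S"
  unfolding common_nodes_def using rV by (auto simp: dpath_def)

lemma D_mono: "S \<subseteq> T \<Longrightarrow> D T \<subseteq> D S"
  unfolding common_nodes_def by blast

lemma D_path: "z \<in> S \<Longrightarrow> dp p \<Longrightarrow> hd p = r \<Longrightarrow> last p = lab z \<Longrightarrow> v \<in> D S \<Longrightarrow> v \<in> set p"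
  unfolding common_nodes_def by blast

lemma D_total:
  assumes "z \<in> S" "S \<subseteq> X" "a \<in> D S" "b \<in> D S"
  shows "a = b \<or> (a, b) \<in> A\<^sup>+ \<or> (b, a) \<in> A\<^sup>+"
proof -
  obtain p where p: "dp p" "hd p = r" "last p = lab z"
    using path_exists labV assms by blast
  show ?thesis using dpath_total[OF p(1)] D_path[OF assms(1) p] assms by blast
qed

lemma MRCA_eq:
  assumes "v \<in> D S" "\<forall>u\<in>D S. u \<noteq> v \<longrightarrow> (u, v) \<in> A\<^sup>+"
  shows "MRCA V E src tgt r lab S = v"
  unfolding MRCA_def above_def
proof (rule the_equality)
  show "v \<in> D S \<and> (\<forall>u\<in>D S. u \<noteq> v \<longrightarrow> (u, v) \<in> A\<^sup>+)" using assms by blast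
next
  fix w assume w: "w \<in> D S \<and> (\<forall>u\<in>D S. u \<noteq> w \<longrightarrow> (u, w) \<in> A\<^sup>+)"
  show "w = v"
  proof (rule ccontr)
    assume "w \<noteq> v"
    then have "(w, v) \<in> A\<^sup>+" "(v, w) \<in> A\<^sup>+" using w assms by auto
    then show False using noncyc by blast
  qed
qed

lemma MRCA_low:
  assumes "z \<in> S" "S \<subseteq> X"
  shows "MRCA V E src tgt r lab S \<in> D S \<and>
    (\<forall>u\<in>D S. u \<noteq> MRCA V E src tgt r lab S \<longrightarrow> (u, MRCA V E src tgt r lab S) \<in> A\<^sup>+)"
proof -
  obtain v where v: "v \<in> D S" and m: "\<And>y. (y, v) \<in> (A\<^sup>+)\<inverse> \<Longrightarrow> y \<notin> D S"
    using wfE_min[OF wfTc r_in_D] by metis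
  have low: "\<forall>u\<in>D S. u \<noteq> v \<longrightarrow> (u, v) \<in> A\<^sup>+"
    using D_total[OF assms] v m by blast
  show ?thesis using MRCA_eq[OF v low] v low by simp
qed

lemma main:
  assumes ZX: "Z \<subseteq> X" and xZ: "x \<in> Z"
  shows "\<exists>y\<in>Z. MRCA V E src tgt r lab {x, y} = MRCA V E src tgt r lab Z"
proof (rule ccontr)
  assume "\<not> ?thesis"
  then have ne: "\<And>y. y \<in> Z \<Longrightarrow> MRCA V E src tgt r lab {x, y} \<noteq> MRCA V E src tgt r lab Z"
    by blast
  define w where "w = MRCA V E src tgt r lab Z"
  define M where "M = (\<lambda>y. MRCA V E src tgt r lab {x, y})"
  have w: "w \<in> D Z" "\<forall>u\<in>D Z. u \<noteq> w \<longrightarrow> (u, w) \<in> A\<^sup>+"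
    using MRCA_low[OF xZ ZX] unfolding w_def by auto
  have My: "M y \<in> D {x, y} \<and> (\<forall>u\<in>D {x, y}. u \<noteq> M y \<longrightarrow> (u, M y) \<in> A\<^sup>+)" if "y \<in> Z" for y
    using MRCA_low[of x "{x,y}"] that xZ ZX unfolding M_def by auto
  have wab: "(w, M y) \<in> A\<^sup>+" if "y \<in> Z" for y
  proof -
    have "w \<in> D {x, y}" using D_mono[of "{x,y}" Z] w(1) that xZ by auto
    moreover have "w \<noteq> M y" using ne[OF that] unfolding M_def w_def by auto
    ultimately show ?thesis using My[OF that] by auto
  qed
  have MDx: "M y \<in> D {x}" if "y \<in> Z" for y
    using My[OF that] D_mono[of "{x}" "{x,y}"] by auto
  obtain u0 where u0: "u0 \<in> M ` Z" and mn: "\<And>y. (y, u0) \<in> A\<^sup>+ \<Longrightarrow> y \<notin> M ` Z"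
    using wfE_min[OF wfT, of "M x" "M ` Z"] xZ by blast
  obtain y0 where y0: "y0 \<in> Z" "u0 = M y0" using u0 by auto
  have u0Dx: "u0 \<in> D {x}" using MDx y0 by auto
  have xX: "x \<in> X" using xZ ZX by auto
  have "u0 \<in> D Z"
    unfolding common_nodes_def
  proof (intro CollectI conjI ballI allI impI)
    show "u0 \<in> V" using u0Dx D_V by auto
  next
    fix z P assume zZ: "z \<in> Z" and P: "dp P \<and> hd P = r \<and> last P = lab z"
    define u' where "u' = M z"
    have u'P: "u' \<in> set P" using D_path[of z "{x,z}" P u'] P My[OF zZ] unfolding u'_def by auto
    have u'Dx: "u' \<in> D {x}" using MDx zZ unfolding u'_def by auto
    show "u0 \<in> set P"
    proof (cases "u0 = u'")
      case True then show ?thesis using u'P by simp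
    next
      case False
      have "(u', u0) \<notin> A\<^sup>+" using mn zZ unfolding u'_def by auto
      then have lt: "(u0, u') \<in> A\<^sup>+" using D_total[of x "{x}" u0 u'] False u0Dx u'Dx xX by auto
      obtain P1 P2 where Ps: "P = P1 @ u' # P2" using u'P split_list by metis
      obtain q where q: "dp q" "hd q = r" "last q = lab x" using path_exists labV xX by blast
      have "u' \<in> set q" using D_path[of x "{x}" q u'] q u'Dx by auto
      then obtain q1 q2 where qs: "q = q1 @ u' # q2" using split_list by metis
      have d1: "dp (P1 @ [u'])" using dpath_split P Ps by metis
      have d2: "dp (u' # q2)" using dpath_split q qs by metis
      have dR: "dp (P1 @ u' # q2)" using dpath_concat[OF d1 d2] by simp
      have hR: "hd (P1 @ u' # q2) = r" using P Ps by (cases P1) auto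
      have lR: "last (P1 @ u' # q2) = lab x" using q qs by simp
      have "u0 \<in> set (P1 @ u' # q2)" using D_path[of x "{x}" "P1 @ u' # q2" u0, OF _ dR hR lR u0Dx] by simp
      moreover have "u0 \<notin> set q2"
        using dpath_above[OF d2] noncyc lt by blast
      ultimately have "u0 \<in> set P1" using False by auto
      then show ?thesis using Ps by auto
    qed
  qed
  moreover have "u0 \<noteq> w" using ne[OF y0(1)] y0 unfolding M_def w_def by auto
  ultimately have "(u0, w) \<in> A\<^sup>+" using w by auto
  moreover have "(w, u0) \<in> A\<^sup>+" using wab y0 by auto
  ultimately show False using noncyc by blast
qed

end

theorem mainTheorem5:
  fixes V :: "'v set" and E :: "'e set" and src tgt :: "'e \<Rightarrow> 'v" and r :: 'v
    and X :: "'x set" and lab :: "'x \<Rightarrow> 'v" and Z :: "'x set"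
  assumes "rooted_network V E src tgt r X lab"
    and "Z \<subseteq> X" and "card Z \<ge> 2"
  shows "\<forall>x\<in>Z. \<exists>y\<in>Z. MRCA V E src tgt r lab {x, y} = MRCA V E src tgt r lab Z"
proof -
  interpret RN V E src tgt r X lab using assms(1) by unfold_locales
  show ?thesis using main assms(2) by blast
qed

end
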